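(* Let $F$ be a commutative field, $1\le h\le n-1$, and let $K$ be a linear complex of $h$-subspaces in $\mathrm{PG}(n,F)$. If $U_1\neq U_2$ are singular $(h-1)$-subspaces of $K$ which are collinear in $\Gamma(n,h-1,F)$ (i.e. $\dim(U_1\cap U_2)=h-2$), then every element of the pencil of $(h-1)$-subspaces determined by $U_1$ and $U_2$ (all $(h-1)$-subspaces containing $U_1\cap U_2$ and contained in $U_1\vee U_2$) is a singular $(h-1)$-subspace of $K$.
   Context: A $d$-subspace is a projective subspace of dimension $d$; $\vee$ denotes join. A linear complex of $h$-subspaces is the set of $h$-subspaces whose Plücker coordinates (image of the span of $v_0,\dots,v_h$ as $F(v_0\wedge\dots\wedge v_h)$ in $\mathbb P(\bigwedge^{h+1}F^{n+1})$) lie in a fixed hyperplane of $\mathbb P(\bigwedge^{h+1}F^{n+1})$. An $(h-1)$-subspace $U$ is singular for $K$ if every $h$-subspace containing $U$ belongs to $K$. $\Gamma(n,h-1,F)$ is the Grassmannian whose points are the $(h-1)$-subspaces and whose lines are pencils of $(h-1)$-subspaces. *)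

theory Defs
  imports "HOL-Analysis.Analysis"
begin

text \<open>Projective space PG(n,F) is modelled on the vector space F^(n+1) = 'a^'n with
  CARD('n) = n+1. A projective d-subspace is a linear subspace of vector dimension d+1.\<close>

definition proj_subspace :: "nat \<Rightarrow> ('a::field ^ 'n) set \<Rightarrow> bool" where
  "proj_subspace d S \<longleftrightarrow> vec.subspace S \<and> vec.dim S = d + 1"

definition proj_join :: "('a::field ^ 'n) set \<Rightarrow> ('a ^ 'n) set \<Rightarrow> ('a ^ 'n) set" where
  "proj_join U W = vec.span (U \<union> W)"

text \<open>Alternating (h+1)-linear forms on F^(n+1), with arguments indexed by 0..h.
  These are exactly the linear functionals on the exterior power of degree h+1.\<close>

definition alt_multilinear :: "nat \<Rightarrow> ((nat \<Rightarrow> 'a::field ^ 'n) \<Rightarrow> 'a) \<Rightarrow> bool" where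
  "alt_multilinear h f \<longleftrightarrow>
     (\<forall>v w. (\<forall>i\<le>h. v i = w i) \<longrightarrow> f v = f w) \<and>
     (\<forall>v i x y a b. i \<le> h \<longrightarrow>
        f (v(i := a *s x + b *s y)) = a * f (v(i := x)) + b * f (v(i := y))) \<and>
     (\<forall>v i j. i \<le> h \<longrightarrow> j \<le> h \<longrightarrow> i \<noteq> j \<longrightarrow> v i = v j \<longrightarrow> f v = 0)"

text \<open>The Pluecker coordinates F(v_0 \<and> ... \<and> v_h) of the span S of v_0..v_h lie in the
  hyperplane given by the functional corresponding to f.\<close>

definition plucker_in_hyperplane ::
  "nat \<Rightarrow> ((nat \<Rightarrow> 'a::field ^ 'n) \<Rightarrow> 'a) \<Rightarrow> ('a ^ 'n) set \<Rightarrow> bool" where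
  "plucker_in_hyperplane h f S \<longleftrightarrow>
     (\<exists>v. (\<forall>i\<le>h. v i \<in> S) \<and> vec.span (v ` {0..h}) = S \<and> f v = 0)"

definition linear_complex ::
  "nat \<Rightarrow> ((nat \<Rightarrow> 'a::field ^ 'n) \<Rightarrow> 'a) \<Rightarrow> ('a ^ 'n) set set" where
  "linear_complex h f = {S. proj_subspace h S \<and> plucker_in_hyperplane h f S}"

definition is_linear_complex :: "nat \<Rightarrow> ('a::field ^ 'n) set set \<Rightarrow> bool" where
  "is_linear_complex h K \<longleftrightarrow>
     (\<exists>f. alt_multilinear h f \<and> (\<exists>v. f v \<noteq> 0) \<and> K = linear_complex h f)"

definition singular :: "nat \<Rightarrow> ('a::field ^ 'n) set set \<Rightarrow> ('a ^ 'n) set \<Rightarrow> bool" where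
  "singular h K U \<longleftrightarrow> proj_subspace (h - 1) U \<and>
     (\<forall>S. proj_subspace h S \<and> U \<subseteq> S \<longrightarrow> S \<in> K)"

end

theory Submission imports Defs begin
lemma am_add:
  assumes "alt_multilinear h f" "i \<le> h"
  shows "f (v(i := x + y)) = f (v(i := x)) + f (v(i := y))"
proof -
  have "f (v(i := 1 *s x + 1 *s y)) = 1 * f (v(i := x)) + 1 * f (v(i := y))"
    using assms unfolding alt_multilinear_def by blast
  then show ?thesis by simp
qed

lemma am_smult:
  assumes "alt_multilinear h f" "i \<le> h"
  shows "f (v(i := c *s x)) = c * f (v(i := x))"
proof -
  have "f (v(i := c *s x + 0 *s x)) = c * f (v(i := x)) + 0 * f (v(i := x))"
    using assms unfolding alt_multilinear_def by blast
  then show ?thesis by simp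
qed

lemma am_zero:
  assumes "alt_multilinear h f" "i \<le> h"
  shows "f (v(i := 0)) = 0"
proof -
  have "f (v(i := 0 *s x + 0 *s x)) = 0 * f (v(i := x)) + 0 * f (v(i := x))"
    using assms unfolding alt_multilinear_def by blast
  then show ?thesis by simp
qed

lemma am_rep:
  assumes "alt_multilinear h f" "i \<le> h" "j \<le> h" "i \<noteq> j" "v i = v j"
  shows "f v = 0"
  using assms unfolding alt_multilinear_def by blast

lemma am_cong:
  assumes "alt_multilinear h f" "\<forall>i\<le>h. v i = w i"
  shows "f v = f w"
  using assms unfolding alt_multilinear_def by blast

lemma am_swap:
  assumes A: "alt_multilinear h f" and "i \<le> h" "k \<le> h" "i \<noteq> k"
  shows "f (v(i := v k, k := v i)) = - f v"
proof -
  define g where "g x y = f (v(i := x, k := y))" for x y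
  have r: "g z (x + y) = g z x + g z y" for x y z
    unfolding g_def using am_add[OF A \<open>k \<le> h\<close>, of "v(i:=z)"] by simp
  have l: "g (x + y) z = g x z + g y z" for x y z
  proof -
    have "g (x + y) z = f ((v(k := z))(i := x + y))" unfolding g_def using assms(4)
      by (simp add: fun_upd_twist)
    also have "\<dots> = f ((v(k := z))(i := x)) + f ((v(k := z))(i := y))"
      using am_add[OF A \<open>i \<le> h\<close>] by blast
    also have "\<dots> = g x z + g y z" unfolding g_def using assms(4)
      by (simp add: fun_upd_twist)
    finally show ?thesis .
  qed
  have d: "g x x = 0" for x
    unfolding g_def by (rule am_rep[OF A \<open>i \<le> h\<close> \<open>k \<le> h\<close> \<open>i \<noteq> k\<close>]) (use assms(4) in simp)
  have "0 = g (v k + v i) (v k + v i)" using d by simp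
  also have "\<dots> = g (v k) (v k + v i) + g (v i) (v k + v i)" by (rule l)
  also have "\<dots> = g (v k) (v i) + g (v i) (v k)" using r d by simp
  finally have "g (v k) (v i) = - g (v i) (v k)" by (simp add: eq_neg_iff_add_eq_0)
  moreover have "g (v i) (v k) = f v" unfolding g_def by simp
  ultimately show ?thesis unfolding g_def by simp
qed

lemma am_perm:
  assumes A: "alt_multilinear h f" and w0: "f w = 0"
  shows "\<forall>\<sigma>. \<sigma> ` {0..h} \<subseteq> {0..h} \<longrightarrow> card {i\<in>{0..h}. \<sigma> i \<noteq> i} = m \<longrightarrow> f (\<lambda>i. w (\<sigma> i)) = 0"
proof (induction m rule: less_induct)
  case (less m)
  show ?case
  proof (intro allI impI)
    fix \<sigma> :: "nat \<Rightarrow> nat"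
    assume s: "\<sigma> ` {0..h} \<subseteq> {0..h}" and cm: "card {i\<in>{0..h}. \<sigma> i \<noteq> i} = m"
    show "f (\<lambda>i. w (\<sigma> i)) = 0"
    proof (cases "\<forall>i\<in>{0..h}. \<sigma> i = i")
      case True
      then have "f (\<lambda>i. w (\<sigma> i)) = f w" by (intro am_cong[OF A]) auto
      then show ?thesis using w0 by simp
    next
      case False
      then obtain i where i: "i \<le> h" "\<sigma> i \<noteq> i" by auto
      show ?thesis
      proof (cases "inj_on \<sigma> {0..h}")
        case False
        then obtain p q where "p\<le>h" "q\<le>h" "p\<noteq>q" "\<sigma> p = \<sigma> q" unfolding inj_on_def by auto
        then show ?thesis by (intro am_rep[OF A, of p q]) auto
      next
        case True
        then have "\<sigma> ` {0..h} = {0..h}" using s by (simp add: endo_inj_surj)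
        then obtain k where k: "k \<le> h" "\<sigma> k = i" using i(1)
          by (metis atLeastAtMost_iff imageE zero_le)
        have ki: "k \<noteq> i" using k i by auto
        define \<tau> where "\<tau> x = (if x = i then \<sigma> k else if x = k then \<sigma> i else \<sigma> x)" for x
        define u where "u = (\<lambda>x. w (\<sigma> x))"
        have uu: "(\<lambda>x. w (\<tau> x)) = u(i := u k, k := u i)"
          unfolding \<tau>_def u_def using ki by (auto simp: fun_eq_iff)
        have ts: "\<tau> ` {0..h} \<subseteq> {0..h}" unfolding \<tau>_def using s k i by auto
        have sub: "{x\<in>{0..h}. \<tau> x \<noteq> x} \<subseteq> {x\<in>{0..h}. \<sigma> x \<noteq> x} - {i}"
          unfolding \<tau>_def using k ki by auto
        have "{x\<in>{0..h}. \<tau> x \<noteq> x} \<subset> {x\<in>{0..h}. \<sigma> x \<noteq> x}" using sub i by auto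
        then have "card {x\<in>{0..h}. \<tau> x \<noteq> x} < m" using cm by (intro psubset_card_mono[THEN less_le_trans]) auto
        then have "f (\<lambda>x. w (\<tau> x)) = 0" using less ts by blast
        moreover have "f (\<lambda>x. w (\<tau> x)) = - f u" unfolding uu
          by (rule am_swap[OF A i(1) k(1) ki[symmetric]])
        ultimately show ?thesis unfolding u_def by simp
      qed
    qed
  qed
qed

lemma am_span:
  assumes A: "alt_multilinear h f" and w0: "f w = 0"
    and u: "\<forall>i\<le>h. u i \<in> vec.span (w ` {0..h})"
  shows "f u = 0"
proof -
  have "\<forall>u. (\<forall>i\<le>h. i < k \<longrightarrow> u i \<in> vec.span (w ` {0..h})) \<and> (\<forall>i\<le>h. k \<le> i \<longrightarrow> u i \<in> w ` {0..h})
          \<longrightarrow> f u = 0" for k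
  proof (induction k)
    case 0
    show ?case
    proof (intro allI impI)
      fix u assume "(\<forall>i\<le>h. i < 0 \<longrightarrow> u i \<in> vec.span (w ` {0..h})) \<and> (\<forall>i\<le>h. 0 \<le> i \<longrightarrow> u i \<in> w ` {0..h})"
      then have "\<forall>i\<le>h. \<exists>j\<in>{0..h}. u i = w j" by auto
      then obtain \<sigma> where \<sigma>: "\<forall>i\<le>h. \<sigma> i \<in> {0..h} \<and> u i = w (\<sigma> i)" by metis
      have e: "f u = f (\<lambda>i. w (\<sigma> i))" using \<sigma> by (intro am_cong[OF A]) auto
      have "\<sigma> ` {0..h} \<subseteq> {0..h}" using \<sigma> by auto
      then have "f (\<lambda>i. w (\<sigma> i)) = 0" using am_perm[OF A w0] by blast
      then show "f u = 0" using e by simp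
    qed
  next
    case (Suc k)
    show ?case
    proof (intro allI impI)
      fix u assume H: "(\<forall>i\<le>h. i < Suc k \<longrightarrow> u i \<in> vec.span (w ` {0..h})) \<and> (\<forall>i\<le>h. Suc k \<le> i \<longrightarrow> u i \<in> w ` {0..h})"
      show "f u = 0"
      proof (cases "k \<le> h")
        case False
        then show ?thesis using Suc H by auto
      next
        case True
        have sp: "vec.subspace {x. f (u(k := x)) = 0}"
          unfolding vec.subspace_def
          using am_zero[OF A True] am_add[OF A True] am_smult[OF A True] by auto
        have "\<forall>x\<in>w ` {0..h}. f (u(k := x)) = 0"
        proof
          fix x assume "x \<in> w ` {0..h}"
          then show "f (u(k := x)) = 0" using Suc.IH H by (auto simp: less_Suc_eq)
        qed
        then have "f (u(k := u k)) = 0" using vec.span_induct[OF _ sp] H True by blast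
        then show ?thesis by simp
      qed
    qed
  qed
  from this[of "Suc h"] u show ?thesis by auto
qed

lemma extend1:
  fixes A B :: "('a::field ^ 'n) set"
  assumes "vec.subspace A" "vec.subspace B" "A \<subseteq> B" "vec.dim B = vec.dim A + 1"
  obtains c where "c \<in> B" "c \<notin> A" "B = vec.span (insert c A)"
proof -
  have "A \<noteq> B" using assms(4) by auto
  then obtain c where c: "c \<in> B" "c \<notin> A" using assms(3) by blast
  have sub: "vec.span (insert c A) \<subseteq> B" using c assms by (intro vec.span_minimal) auto
  have "vec.dim (vec.span (insert c A)) = vec.dim A + 1"
  proof -
    have "c \<notin> vec.span A" using assms(1) c vec.span_eq_iff by metis
    then show ?thesis by (simp add: vec.dim_span vec.dim_insert)
  qed
  then have "vec.span (insert c A) = B"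
    using sub assms by (intro vec.subspace_dim_equal) (auto simp: vec.subspace_span)
  then show ?thesis using that c by blast
qed

lemma sing_zero:
  fixes K :: "('a::field ^ 'n) set set" and v :: "nat \<Rightarrow> 'a ^ 'n"
  assumes card: "CARD('n) = n + 1" "h \<le> n - 1" "1 \<le> h"
    and sing: "singular h K U" and K: "K = linear_complex h f" and A: "alt_multilinear h f"
    and v: "\<forall>i<h. v i \<in> U"
  shows "f v = 0"
proof -
  have U: "vec.subspace U" "vec.dim U = h"
    using sing card unfolding singular_def proj_subspace_def by auto
  have ex: "\<exists>T. proj_subspace h T \<and> U \<subseteq> T \<and> z \<in> T" if z: "z \<notin> U" for z
  proof -
    have "vec.dim (vec.span (insert z U)) = h + 1"
    proof -
      have "z \<notin> vec.span U" using U z vec.span_eq_iff by metis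
      then show ?thesis using U by (simp add: vec.dim_span vec.dim_insert)
    qed
    then show ?thesis unfolding proj_subspace_def
      by (intro exI[of _ "vec.span (insert z U)"]) (auto simp: vec.subspace_span vec.span_superset[THEN subsetD])
  qed
  obtain T where T: "proj_subspace h T" "U \<subseteq> T" "v h \<in> T"
  proof (cases "v h \<in> U")
    case True
    have "U \<noteq> UNIV" using U card vec_dim_card[where 'a='a and 'n='n] by auto
    then obtain y where "y \<notin> U" by auto
    then show ?thesis using ex True that by blast
  next
    case False
    then show ?thesis using ex that by blast
  qed
  then have "T \<in> K" using sing unfolding singular_def by blast
  then obtain w where w: "vec.span (w ` {0..h}) = T" "f w = 0"
    unfolding K linear_complex_def plucker_in_hyperplane_def by blast
  have "\<forall>i\<le>h. v i \<in> vec.span (w ` {0..h})"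
    using v T w(1) by (metis le_neq_implies_less subsetD)
  then show ?thesis using am_span[OF A w(2)] by blast
qed

theorem corollary5p5:
  fixes K :: "('a::field ^ 'n) set set" and n h :: nat and U1 U2 W :: "('a ^ 'n) set"
  assumes "CARD('n) = n + 1"
    and "1 \<le> h" and "h \<le> n - 1"
    and "is_linear_complex h K"
    and "singular h K U1" and "singular h K U2" and "U1 \<noteq> U2"
    and "vec.dim (U1 \<inter> U2) = h - 1"
    and "proj_subspace (h - 1) W" and "U1 \<inter> U2 \<subseteq> W" and "W \<subseteq> proj_join U1 U2"
  shows "singular h K W"
proof -
  obtain f where A: "alt_multilinear h f" and K: "K = linear_complex h f"
    using assms(4) unfolding is_linear_complex_def by blast
  define D where "D = U1 \<inter> U2"
  have U1: "vec.subspace U1" and U2: "vec.subspace U2"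
    using assms(5,6) unfolding singular_def proj_subspace_def by auto
  have D: "vec.subspace D" "vec.dim D = h - 1" unfolding D_def using U1 U2 assms(8)
    by (auto simp: vec.subspace_inter)
  have Wp: "vec.subspace W" "vec.dim W = vec.dim D + 1" "D \<subseteq> W"
    using assms(9,10,2) D unfolding proj_subspace_def D_def by auto
  obtain c where c: "c \<in> W" "W = vec.span (insert c D)"
    using extend1[OF D(1) Wp(1) Wp(3) Wp(2)] by blast
  obtain Bd where Bd: "finite Bd" "Bd \<subseteq> D" "vec.span Bd = D" "card Bd = h - 1"
    using vec.basis_subspace_exists[OF D(1)] D(2) by metis
  obtain d where d: "bij_betw d {0..<h-1} Bd" using ex_bij_betw_nat_finite[OF Bd(1)] Bd(4) by metis
  show ?thesis unfolding singular_def
  proof (intro conjI allI impI)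
    show "proj_subspace (h - 1) W" by fact
    fix S assume S: "proj_subspace h S \<and> W \<subseteq> S"
    have Sp: "vec.subspace S" "vec.dim S = vec.dim W + 1"
      using S Wp assms(2,9) unfolding proj_subspace_def by auto
    obtain x where x: "x \<in> S" "S = vec.span (insert x W)"
      using extend1[OF Wp(1) Sp(1) _ Sp(2)] S by blast
    define v where "v i = (if i < h - 1 then d i else if i = h - 1 then c else x)" for i
    have dD: "d i \<in> D" if "i < h - 1" for i using d Bd(2) that
      by (auto simp: bij_betw_def)
    have vS: "\<forall>i\<le>h. v i \<in> S"
      unfolding v_def using dD Wp(3) c(1) x(1) S by auto
    have span: "vec.span (v ` {0..h}) = S"
    proof
      show "vec.span (v ` {0..h}) \<subseteq> S" using vS Sp(1) by (intro vec.span_minimal) auto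
      define V where "V = vec.span (v ` {0..h})"
      have sV: "vec.subspace V" unfolding V_def by (simp add: vec.subspace_span)
      have inV: "v i \<in> V" if "i \<le> h" for i
        unfolding V_def using that by (intro vec.span_superset[THEN subsetD]) auto
      have "Bd \<subseteq> V"
      proof
        fix b assume "b \<in> Bd"
        then obtain i where "i < h - 1" "b = d i" using d by (auto simp: bij_betw_def)
        then show "b \<in> V" using inV[of i] unfolding v_def by auto
      qed
      then have "D \<subseteq> V" using Bd(3) vec.span_minimal[OF _ sV] by blast
      moreover have "c \<in> V" using inV[of "h - 1"] unfolding v_def by auto
      ultimately have "W \<subseteq> V" using c(2) vec.span_minimal[OF _ sV] by (metis insert_subset)
      moreover have "\<not> h < h - 1" "h \<noteq> h - 1" using assms(2) by auto
      then have "x \<in> V" using inV[of h] unfolding v_def by simp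
      ultimately have "S \<subseteq> V" using x(2) vec.span_minimal[OF _ sV] by (metis insert_subset)
      then show "S \<subseteq> vec.span (v ` {0..h})" unfolding V_def .
    qed
    have "c \<in> vec.span (U1 \<union> U2)" using c(1) assms(11) unfolding proj_join_def by auto
    then obtain u1 u2 where u: "c = u1 + u2" "u1 \<in> U1" "u2 \<in> U2"
    proof -
      have e: "vec.span U1 = U1" "vec.span U2 = U2" using U1 U2 vec.span_eq_iff by metis+
      obtain a b where "c = a + b" "a \<in> vec.span U1" "b \<in> vec.span U2"
        using \<open>c \<in> vec.span (U1 \<union> U2)\<close> unfolding vec.span_Un by blast
      then show ?thesis using that e by metis
    qed
    have hh: "h - 1 \<le> h" by simp
    have vv: "v = v(h - 1 := u1 + u2)" using u(1) unfolding v_def by (auto simp: fun_eq_iff)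
    have z1: "f (v(h - 1 := u1)) = 0"
      by (rule sing_zero[OF assms(1,3,2,5) K A]) (use dD u D_def v_def in auto)
    have z2: "f (v(h - 1 := u2)) = 0"
      by (rule sing_zero[OF assms(1,3,2,6) K A]) (use dD u D_def v_def in auto)
    have "f v = 0" using am_add[OF A hh, of v u1 u2] z1 z2 vv by simp
    then have "plucker_in_hyperplane h f S"
      unfolding plucker_in_hyperplane_def using vS span by blast
    then show "S \<in> K" unfolding K linear_complex_def using S by blast
  qed
qed

end
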